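(* Let $\preceq$ be a preorder on a set $\mathcal{X}$ and let $k\ge1$ be an integer. Let $\mathcal{F}\subseteq\{0,\dots,k\}^{\mathcal{X}}$ be a class of functions with $\mathrm{fat}^o_2(\mathcal{F},\mathcal{X})=d$. Then for any $n>d$ and any ordered $\mathcal{X}$-valued tree $\mathbf{x}$ of depth $n$, $$\mathcal{N}_\infty(\mathcal{F},1/2,\mathbf{x})\le\sum_{i=0}^d\binom ni k^i.$$ Hence, for a class $\mathcal{G}\subseteq[-1,1]^{\mathcal{X}}$, for any $\beta>0$ and any ordered $\mathcal{X}$-valued tree $\mathbf{x}$ of depth $n$, $$\mathcal{N}_\infty(\mathcal{G},\beta,\mathbf{x})\le\Big(\frac{2en}{\beta}\Big)^{\mathrm{fat}^o_\beta(\mathcal{G},\mathcal{X})}.$$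
   Context: A preorder is a reflexive, transitive binary relation. An $\mathcal{X}$-valued tree of depth $n$ is a sequence of maps $\mathbf{x}_t:\{0,1\}^{t-1}\to\mathcal{X}$, $t=1,\dots,n$, with $\mathbf{x}_t(y)=\mathbf{x}_t(y_1,\dots,y_{t-1})$ for $y\in\{0,1\}^n$. It is ordered if for every $y\in\{0,1\}^n$, $\mathbf{x}_t(y)\preceq\mathbf{x}_{t+1}(y)$ for all $t=1,\dots,n-1$. For $\mathcal{X}'\subseteq\mathcal{X}$, a class $\mathcal{F}\subseteq\mathbb{R}^{\mathcal{X}}$ shatters at scale $\beta>0$ an ordered $\mathcal{X}'$-valued tree $\mathbf{x}$ of depth $d$ if there is an $\mathbb{R}$-valued witness tree $\mathbf{s}$ of depth $d$ such that for every $y\in\{0,1\}^d$ there exists $f\in\mathcal{F}$ with $(2y_t-1)(f(\mathbf{x}_t(y))-\mathbf{s}_t(y))\ge\beta/2$ for all $t$; $\mathrm{fat}^o_\beta(\mathcal{F},\mathcal{X}')$ is the largest depth of an ordered $\mathcal{X}'$-valued tree shattered at scale $\beta$. A set $V$ of $\mathbb{R}$-valued trees of depth $n$ is a sequential $\gamma$-cover (in $\ell_\infty$) of $\mathcal{F}$ on $\mathbf{x}$ if for every $f\in\mathcal{F}$ and every $y\in\{0,1\}^n$ there is $\mathbf{v}\in V$ with $\max_t|\mathbf{v}_t(y)-f(\mathbf{x}_t(y))|\le\gamma$; $\mathcal{N}_\infty(\mathcal{F},\gamma,\mathbf{x})$ is the size of the smallest such cover. *)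

theory Defs
  imports "HOL-Analysis.Analysis" "HOL-Library.Extended_Nat"
begin

text \<open>A tree of depth n with values in type 'b is represented as a function
  x :: nat \<Rightarrow> bool list \<Rightarrow> 'b; the node at (0-based) level t < n along a path
  y \<in> {0,1}^n (a bool list of length n, True = 1) is x t (take t y), so it only
  depends on the first t bits of the path (paper: x_{t+1}(y_1,...,y_t)).\<close>

definition node :: "(nat \<Rightarrow> bool list \<Rightarrow> 'b) \<Rightarrow> nat \<Rightarrow> bool list \<Rightarrow> 'b" where
  "node x t y = x t (take t y)"

definition ordered_tree ::
  "('a \<Rightarrow> 'a \<Rightarrow> bool) \<Rightarrow> 'a set \<Rightarrow> nat \<Rightarrow> (nat \<Rightarrow> bool list \<Rightarrow> 'a) \<Rightarrow> bool" where
  "ordered_tree le X' n x \<longleftrightarrow>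
     (\<forall>y. length y = n \<longrightarrow>
        (\<forall>t<n. node x t y \<in> X') \<and>
        (\<forall>t. t + 1 < n \<longrightarrow> le (node x t y) (node x (t + 1) y)))"

definition sgn_bit :: "bool \<Rightarrow> real" where
  "sgn_bit b = (if b then 1 else -1)"

definition shatters_o ::
  "('a \<Rightarrow> real) set \<Rightarrow> real \<Rightarrow> nat \<Rightarrow> (nat \<Rightarrow> bool list \<Rightarrow> 'a) \<Rightarrow> bool" where
  "shatters_o F \<beta> d x \<longleftrightarrow>
     (\<exists>s :: nat \<Rightarrow> bool list \<Rightarrow> real.
        \<forall>y. length y = d \<longrightarrow>
          (\<exists>f\<in>F. \<forall>t<d. sgn_bit (y ! t) * (f (node x t y) - node s t y) \<ge> \<beta> / 2))"

definition fat_o ::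
  "('a \<Rightarrow> 'a \<Rightarrow> bool) \<Rightarrow> ('a \<Rightarrow> real) set \<Rightarrow> 'a set \<Rightarrow> real \<Rightarrow> enat" where
  "fat_o le F X' \<beta> = Sup {enat d | d. \<exists>x. ordered_tree le X' d x \<and> shatters_o F \<beta> d x}"

definition is_seq_cover ::
  "(nat \<Rightarrow> bool list \<Rightarrow> real) set \<Rightarrow> ('a \<Rightarrow> real) set \<Rightarrow> real \<Rightarrow> nat
     \<Rightarrow> (nat \<Rightarrow> bool list \<Rightarrow> 'a) \<Rightarrow> bool" where
  "is_seq_cover V F \<gamma> n x \<longleftrightarrow>
     (\<forall>f\<in>F. \<forall>y. length y = n \<longrightarrow>
        (\<exists>v\<in>V. \<forall>t<n. \<bar>node v t y - f (node x t y)\<bar> \<le> \<gamma>))"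

text \<open>Sequential l_infinity covering number (\<infinity> if no finite cover exists).\<close>
definition N_inf ::
  "('a \<Rightarrow> real) set \<Rightarrow> real \<Rightarrow> nat \<Rightarrow> (nat \<Rightarrow> bool list \<Rightarrow> 'a) \<Rightarrow> enat" where
  "N_inf F \<gamma> n x = Inf {enat (card V) | V. finite V \<and> is_seq_cover V F \<gamma> n x}"

end

theory Submission
  imports Defs
begin


definition glue :: "'b \<Rightarrow> (nat \<Rightarrow> bool list \<Rightarrow> 'b) \<Rightarrow> (nat \<Rightarrow> bool list \<Rightarrow> 'b) \<Rightarrow> nat \<Rightarrow> bool list \<Rightarrow> 'b" where
  "glue c l r = (\<lambda>t p. if t = 0 then c else (if hd p then r else l) (t - 1) (tl p))"

lemma node_glue_0[simp]: "node (glue c l r) 0 y = c"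
  by (simp add: node_def glue_def)
lemma node_glue_Suc[simp]: "node (glue c l r) (Suc t) (b # y) = node (if b then r else l) t y"
  by (simp add: node_def glue_def)

definition sub :: "(nat \<Rightarrow> bool list \<Rightarrow> 'b) \<Rightarrow> bool \<Rightarrow> nat \<Rightarrow> bool list \<Rightarrow> 'b" where
  "sub x b = (\<lambda>t p. x (Suc t) (b # p))"
lemma node_sub[simp]: "node (sub x b) t y = node x (Suc t) (b # y)"
  by (simp add: node_def sub_def)
lemma node_0: "node x 0 y = x 0 []" by (simp add: node_def)

definition cov :: "('a \<Rightarrow> real) set \<Rightarrow> nat \<Rightarrow> (nat \<Rightarrow> bool list \<Rightarrow> 'a) \<Rightarrow> nat \<Rightarrow> bool" where
  "cov F n x m \<longleftrightarrow> (\<exists>V. finite V \<and> card V \<le> m \<and> is_seq_cover V F (1/2) n x)"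

lemma cov_mono: "cov F n x m \<Longrightarrow> m \<le> m' \<Longrightarrow> cov F n x m'"
  unfolding cov_def by auto
lemma cov_subset: "cov F n x m \<Longrightarrow> F' \<subseteq> F \<Longrightarrow> cov F' n x m"
  unfolding cov_def is_seq_cover_def by blast
lemma cov_empty: "cov {} n x m"
  unfolding cov_def is_seq_cover_def by (rule exI[of _ "{}"]) auto
lemma cov_union: "cov A n x m1 \<Longrightarrow> cov B n x m2 \<Longrightarrow> cov (A \<union> B) n x (m1 + m2)"
  unfolding cov_def
proof (elim exE conjE)
  fix V1 V2 assume "finite V1" "card V1 \<le> m1" "is_seq_cover V1 A (1/2) n x"
    "finite V2" "card V2 \<le> m2" "is_seq_cover V2 B (1/2) n x"
  then show "\<exists>V. finite V \<and> card V \<le> m1 + m2 \<and> is_seq_cover V (A \<union> B) (1 / 2) n x"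
    by (intro exI[of _ "V1 \<union> V2"]) (auto simp: is_seq_cover_def intro: order.trans[OF card_Un_le] ; blast)
qed

lemma cov_UN: "finite I \<Longrightarrow> (\<forall>i\<in>I. cov (F i) n x m) \<Longrightarrow> cov (\<Union>i\<in>I. F i) n x (card I * m)"
proof (induction I rule: finite_induct)
  case empty then show ?case by (simp add: cov_empty)
next
  case (insert i I)
  then have "cov (F i \<union> (\<Union>i\<in>I. F i)) n x (m + card I * m)"
    by (intro cov_union) auto
  then show ?case using insert by simp
qed

lemma surj_from:
  assumes "finite A" "A \<noteq> {}" "card A \<le> m"
  shows "\<exists>p. A = p ` {..<m}"
proof -
  obtain h where h: "bij_betw h {0..<card A} A" using ex_bij_betw_nat_finite[OF assms(1)] by blast
  have c: "card A > 0" using assms by auto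
  define p where "p i = h (min i (card A - 1))" for i
  have "p ` {..<m} \<subseteq> A" using h c unfolding p_def bij_betw_def by auto
  moreover have "A \<subseteq> p ` {..<m}"
  proof
    fix a assume "a \<in> A"
    then have "a \<in> h ` {0..<card A}" using h by (simp add: bij_betw_def)
    then obtain j where j: "j < card A" "a = h j" by auto
    then have pj: "p j = a" unfolding p_def by auto
    have "j \<in> {..<m}" using j assms(3) by simp
    then show "a \<in> p ` {..<m}" using pj by blast
  qed
  ultimately show ?thesis by blast
qed

lemma cov_glue:
  assumes l: "cov H n (sub x False) m" and r: "cov H n (sub x True) m"
    and c: "\<forall>f\<in>H. \<bar>c - f (x 0 [])\<bar> \<le> 1/2"
  shows "cov H (Suc n) x m"
proof (cases "H = {}")
  case True then show ?thesis by (simp add: cov_empty)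
next
  case False
  then obtain f0 where f0: "f0 \<in> H" by auto
  obtain Vl where Vl: "finite Vl" "card Vl \<le> m" "is_seq_cover Vl H (1/2) n (sub x False)"
    using l unfolding cov_def by auto
  obtain Vr where Vr: "finite Vr" "card Vr \<le> m" "is_seq_cover Vr H (1/2) n (sub x True)"
    using r unfolding cov_def by auto
  have "Vl \<noteq> {}" using Vl(3) f0 unfolding is_seq_cover_def
    by (metis empty_iff length_replicate)
  then obtain pl where pl: "Vl = pl ` {..<m}" using surj_from Vl by blast
  have "Vr \<noteq> {}" using Vr(3) f0 unfolding is_seq_cover_def
    by (metis empty_iff length_replicate)
  then obtain pr where pr: "Vr = pr ` {..<m}" using surj_from Vr by blast
  define V where "V = (\<lambda>i. glue c (pl i) (pr i)) ` {..<m}"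
  have "finite V" unfolding V_def by simp
  moreover have "card V \<le> m" unfolding V_def
    using card_image_le[of "{..<m}" "\<lambda>i. glue c (pl i) (pr i)"] by simp
  moreover have "is_seq_cover V H (1/2) (Suc n) x"
    unfolding is_seq_cover_def
  proof (intro ballI allI impI)
    fix f and y :: "bool list" assume f: "f \<in> H" and y: "length y = Suc n"
    then obtain b :: bool and y' where yy: "y = b # y'" "length y' = n" by (cases y) auto
    have "\<exists>i<m. \<forall>t<n. \<bar>node (if b then pr i else pl i) t y' - f (node x (Suc t) (b # y'))\<bar> \<le> 1/2"
    proof (cases b)
      case True
      then show ?thesis using Vr(3) f yy unfolding is_seq_cover_def pr by fastforce
    next
      case False
      then show ?thesis using Vl(3) f yy unfolding is_seq_cover_def pl by fastforce
    qed
    then obtain i where i: "i < m" and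
      iv: "\<forall>t<n. \<bar>node (if b then pr i else pl i) t y' - f (node x (Suc t) (b # y'))\<bar> \<le> 1/2" by blast
    have "\<forall>t<Suc n. \<bar>node (glue c (pl i) (pr i)) t y - f (node x t y)\<bar> \<le> 1/2"
    proof (intro allI impI)
      fix t assume "t < Suc n"
      then show "\<bar>node (glue c (pl i) (pr i)) t y - f (node x t y)\<bar> \<le> 1/2"
      proof (cases t)
        case 0
        have "node x 0 y = x 0 []" by (simp add: node_0)
        then show ?thesis using c f 0 by simp
      next
        case (Suc t')
        then show ?thesis using iv \<open>t < Suc n\<close> unfolding yy by simp
      qed
    qed
    then show "\<exists>v\<in>V. \<forall>t<Suc n. \<bar>node v t y - f (node x t y)\<bar> \<le> 1 / 2"
      using i unfolding V_def by blast
  qed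
  ultimately show ?thesis unfolding cov_def by blast
qed

lemma shat_mono: "shatters_o F \<beta> d x \<Longrightarrow> F \<subseteq> F' \<Longrightarrow> shatters_o F' \<beta> d x"
  unfolding shatters_o_def by blast

lemma ord_mono: "ordered_tree le S n x \<Longrightarrow> S \<subseteq> S' \<Longrightarrow> ordered_tree le S' n x"
  unfolding ordered_tree_def by blast

lemma ord_chain:
  assumes "reflp le" "transp le" "ordered_tree le S n x" "length y = n"
  shows "t < n \<Longrightarrow> le (node x 0 y) (node x t y)"
proof (induction t)
  case 0 then show ?case using assms(1) by (simp add: reflpD)
next
  case (Suc t)
  then have "le (node x t y) (node x (t+1) y)" using assms(3,4) unfolding ordered_tree_def by auto
  then show ?case using Suc assms(2) by (metis Suc_eq_plus1 Suc_lessD transpD)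
qed

lemma ord_sub:
  assumes "reflp le" "transp le" "ordered_tree le S (Suc n) x"
  shows "ordered_tree le {z\<in>S. le (x 0 []) z} n (sub x b)"
  unfolding ordered_tree_def
proof (intro allI impI, rule conjI)
  fix y :: "bool list" assume y: "length y = n"
  then have y': "length (b # y) = Suc n" by simp
  show "\<forall>t<n. node (sub x b) t y \<in> {z \<in> S. le (x 0 []) z}"
  proof (intro allI impI)
    fix t assume t: "t < n"
    have "node x (Suc t) (b # y) \<in> S" using assms(3) y' t unfolding ordered_tree_def by auto
    moreover have "le (node x 0 (b # y)) (node x (Suc t) (b # y))"
      using ord_chain[OF assms y'] t by simp
    ultimately show "node (sub x b) t y \<in> {z \<in> S. le (x 0 []) z}" by (simp add: node_0)
  qed
  show "\<forall>t. t + 1 < n \<longrightarrow> le (node (sub x b) t y) (node (sub x b) (t + 1) y)"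
    using assms(3) y' unfolding ordered_tree_def by auto
qed

lemma glue_shatter:
  assumes ozl: "ordered_tree le S' D zl" and ozr: "ordered_tree le S' D zr"
    and S': "S' = {z\<in>S. le x0 z}" and x0: "x0 \<in> S"
    and sl: "shatters_o A 2 D zl" and sr: "shatters_o B 2 D zr"
    and fA: "\<forall>f\<in>A. f x0 = real i" and fB: "\<forall>f\<in>B. f x0 = real j" and ij: "i + 2 \<le> j"
  shows "ordered_tree le S (Suc D) (glue x0 zl zr) \<and> shatters_o (A \<union> B) 2 (Suc D) (glue x0 zl zr)"
proof
  show "ordered_tree le S (Suc D) (glue x0 zl zr)"
    unfolding ordered_tree_def
  proof (intro allI impI, rule conjI)
    fix y :: "bool list" assume y: "length y = Suc D"
    then obtain b :: bool and y' where yy: "y = b # y'" "length y' = D" by (cases y) auto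
    let ?z = "if b then zr else zl"
    have oz: "ordered_tree le S' D ?z" using ozl ozr by simp
    show "\<forall>t<Suc D. node (glue x0 zl zr) t y \<in> S"
    proof (intro allI impI)
      fix t assume "t < Suc D"
      then show "node (glue x0 zl zr) t y \<in> S"
        using oz x0 yy S' unfolding ordered_tree_def by (cases t) auto
    qed
    show "\<forall>t. t + 1 < Suc D \<longrightarrow> le (node (glue x0 zl zr) t y) (node (glue x0 zl zr) (t + 1) y)"
    proof (intro allI impI)
      fix t assume t: "t + 1 < Suc D"
      show "le (node (glue x0 zl zr) t y) (node (glue x0 zl zr) (t + 1) y)"
      proof (cases t)
        case 0
        have "node ?z 0 y' \<in> S'" using oz yy t 0 unfolding ordered_tree_def by auto
        then show ?thesis using 0 yy S' by simp
      next
        case (Suc t')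
        then show ?thesis using oz yy t unfolding ordered_tree_def by simp
      qed
    qed
  qed
  obtain wl where wl: "\<forall>y. length y = D \<longrightarrow> (\<exists>f\<in>A. \<forall>t<D. sgn_bit (y ! t) * (f (node zl t y) - node wl t y) \<ge> 2 / 2)"
    using sl unfolding shatters_o_def by blast
  obtain wr where wr: "\<forall>y. length y = D \<longrightarrow> (\<exists>f\<in>B. \<forall>t<D. sgn_bit (y ! t) * (f (node zr t y) - node wr t y) \<ge> 2 / 2)"
    using sr unfolding shatters_o_def by blast
  show "shatters_o (A \<union> B) 2 (Suc D) (glue x0 zl zr)"
    unfolding shatters_o_def
  proof (intro exI[of _ "glue ((real i + real j) / 2) wl wr"] allI impI)
    fix y :: "bool list" assume y: "length y = Suc D"
    then obtain b :: bool and y' where yy: "y = b # y'" "length y' = D" by (cases y) auto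
    show "\<exists>f\<in>A \<union> B. \<forall>t<Suc D. 2 / 2 \<le> sgn_bit (y ! t) *
        (f (node (glue x0 zl zr) t y) - node (glue ((real i + real j) / 2) wl wr) t y)"
    proof (cases b)
      case True
      then obtain f where f: "f \<in> B" "\<forall>t<D. sgn_bit (y' ! t) * (f (node zr t y') - node wr t y') \<ge> 2 / 2"
        using wr yy by blast
      have "\<forall>t<Suc D. 2 / 2 \<le> sgn_bit (y ! t) *
        (f (node (glue x0 zl zr) t y) - node (glue ((real i + real j) / 2) wl wr) t y)"
      proof (intro allI impI)
        fix t assume t: "t < Suc D"
        show "2 / 2 \<le> sgn_bit (y ! t) *
          (f (node (glue x0 zl zr) t y) - node (glue ((real i + real j) / 2) wl wr) t y)"
        proof (cases t)
          case 0
          have "real i + 2 \<le> real j" using ij by linarith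
          moreover have "f x0 = real j" using fB f by blast
          ultimately show ?thesis using 0 yy True by (simp add: sgn_bit_def field_simps)
        next
          case (Suc t')
          then show ?thesis using f t yy True by simp
        qed
      qed
      then show ?thesis using f by blast
    next
      case False
      then obtain f where f: "f \<in> A" "\<forall>t<D. sgn_bit (y' ! t) * (f (node zl t y') - node wl t y') \<ge> 2 / 2"
        using wl yy by blast
      have "\<forall>t<Suc D. 2 / 2 \<le> sgn_bit (y ! t) *
        (f (node (glue x0 zl zr) t y) - node (glue ((real i + real j) / 2) wl wr) t y)"
      proof (intro allI impI)
        fix t assume t: "t < Suc D"
        show "2 / 2 \<le> sgn_bit (y ! t) *
          (f (node (glue x0 zl zr) t y) - node (glue ((real i + real j) / 2) wl wr) t y)"
        proof (cases t)
          case 0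
          have "real i + 2 \<le> real j" using ij by linarith
          moreover have "f x0 = real i" using fA f by blast
          ultimately show ?thesis using 0 yy False by (simp add: sgn_bit_def field_simps)
        next
          case (Suc t')
          then show ?thesis using f t yy False by simp
        qed
      qed
      then show ?thesis using f by blast
    qed
  qed
qed



definition GG :: "nat \<Rightarrow> nat \<Rightarrow> nat \<Rightarrow> nat" where
  "GG k D n = (\<Sum>i<D. (n choose i) * k ^ i)"

lemma GG_rec: "GG k (Suc D) (Suc n) = GG k (Suc D) n + k * GG k D n"
proof -
  have "GG k (Suc D) (Suc n) = 1 + (\<Sum>i<D. (Suc n choose Suc i) * k ^ Suc i)"
    unfolding GG_def by (subst sum.lessThan_Suc_shift) simp
  also have "\<dots> = 1 + (\<Sum>i<D. (n choose Suc i) * k ^ Suc i) + (\<Sum>i<D. (n choose i) * k ^ Suc i)"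
    by (simp add: sum.distrib algebra_simps)
  also have "1 + (\<Sum>i<D. (n choose Suc i) * k ^ Suc i) = GG k (Suc D) n"
    unfolding GG_def by (subst sum.lessThan_Suc_shift) simp
  also have "(\<Sum>i<D. (n choose i) * k ^ Suc i) = k * GG k D n"
    unfolding GG_def by (simp add: sum_distrib_left algebra_simps)
  finally show ?thesis .
qed

lemma GG_mono: "D \<le> D' \<Longrightarrow> GG k D n \<le> GG k D' n"
  unfolding GG_def by (rule sum_mono2) auto

lemma GG_0: "GG k (Suc D) 0 = 1"
  unfolding GG_def by (subst sum.lessThan_Suc_shift) simp

lemma core:
  assumes refl: "reflp le" and trans: "transp le"
  shows "ordered_tree le S n x \<Longrightarrow> (\<forall>f\<in>F. \<forall>a. f a \<in> of_nat ` {0..k}) \<Longrightarrow>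
    \<not> (\<exists>z. ordered_tree le S D z \<and> shatters_o F 2 D z) \<Longrightarrow> cov F n x (GG k D n)"
proof (induction n arbitrary: D S x F)
  case 0
  show ?case
  proof (cases "F = {}")
    case True then show ?thesis by (simp add: cov_empty)
  next
    case False
    have "D \<noteq> 0"
    proof
      assume "D = 0"
      have "ordered_tree le S 0 x" by (simp add: ordered_tree_def)
      moreover have "shatters_o F 2 0 x" using False unfolding shatters_o_def by auto
      ultimately show False using 0(3) \<open>D = 0\<close> by blast
    qed
    then obtain D' where D: "D = Suc D'" by (cases D) auto
    have "is_seq_cover {\<lambda>_ _. 0} F (1/2) 0 x" unfolding is_seq_cover_def by auto
    then have "cov F 0 x 1" unfolding cov_def by (intro exI[of _ "{\<lambda>_ _. 0}"]) auto
    then show ?thesis using D GG_0 by simp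
  qed
next
  case (Suc n)
  note ord = Suc.prems(1) and vals = Suc.prems(2) and ns = Suc.prems(3)
  show ?case
  proof (cases "F = {}")
    case True then show ?thesis by (simp add: cov_empty)
  next
    case False
    have "D \<noteq> 0"
    proof
      assume "D = 0"
      have "ordered_tree le S 0 x" by (simp add: ordered_tree_def)
      moreover have "shatters_o F 2 0 x" using False unfolding shatters_o_def by auto
      ultimately show False using ns \<open>D = 0\<close> by blast
    qed
    then obtain D' where D: "D = Suc D'" by (cases D) auto
    define x0 where "x0 = x 0 []"
    define S' where "S' = {z\<in>S. le x0 z}"
    define Fi where "Fi i = {f\<in>F. f x0 = real i}" for i
    define Big where "Big i \<longleftrightarrow> (\<exists>z. ordered_tree le S' D' z \<and> shatters_o (Fi i) 2 D' z)" for i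
    have x0S: "x0 \<in> S"
    proof -
      have "node x 0 (replicate (Suc n) False) \<in> S" using ord unfolding ordered_tree_def by auto
      then show ?thesis by (simp add: node_0 x0_def)
    qed
    have osub: "ordered_tree le S' n (sub x b)" for b
      using ord_sub[OF refl trans ord] unfolding S'_def x0_def .
    have sep: "False" if B1: "Big i" and B2: "Big j" and ij: "i + 2 \<le> j" for i j
    proof -
      obtain zl where zl: "ordered_tree le S' D' zl" "shatters_o (Fi i) 2 D' zl" using B1 unfolding Big_def by blast
      obtain zr where zr: "ordered_tree le S' D' zr" "shatters_o (Fi j) 2 D' zr" using B2 unfolding Big_def by blast
      have "ordered_tree le S (Suc D') (glue x0 zl zr) \<and> shatters_o (Fi i \<union> Fi j) 2 (Suc D') (glue x0 zl zr)"
        by (rule glue_shatter[OF zl(1) zr(1) S'_def x0S zl(2) zr(2) _ _ ij]) (auto simp: Fi_def)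
      moreover have "Fi i \<union> Fi j \<subseteq> F" unfolding Fi_def by auto
      moreover have "shatters_o F 2 (Suc D') (glue x0 zl zr)"
        using calculation shat_mono by blast
      ultimately show False using ns D by blast
    qed
    obtain a where a: "a \<le> k" "\<forall>i\<in>{0..k} - {a, Suc a}. \<not> Big i"
    proof (cases "\<exists>i\<in>{0..k}. Big i")
      case True
      then obtain i0 where i0: "i0 \<le> k" "Big i0" by auto
      define a where "a = (LEAST i. Big i)"
      have Ba: "Big a" unfolding a_def using i0(2) by (rule LeastI)
      have "a \<le> i0" unfolding a_def using i0(2) by (rule Least_le)
      moreover have "\<forall>i\<in>{0..k} - {a, Suc a}. \<not> Big i"
      proof (intro ballI notI)
        fix i assume i: "i \<in> {0..k} - {a, Suc a}" "Big i"
        have "a \<le> i" unfolding a_def using i(2) by (rule Least_le)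
        then have "a + 2 \<le> i" using i(1) by auto
        then show False using sep[OF Ba i(2)] by blast
      qed
      ultimately show ?thesis using that[of a] i0 by auto
    next
      case False
      then show ?thesis using that[of 0] by auto
    qed
    define H where "H = Fi a \<union> Fi (Suc a)"
    define I where "I = {0..k} - {a, Suc a}"
    have HF: "H \<subseteq> F" unfolding H_def Fi_def by auto
    have covH: "cov H (Suc n) x (GG k D n)"
    proof (rule cov_glue[where c = "real a + 1/2"])
      have nsH: "\<not> (\<exists>z. ordered_tree le S' D z \<and> shatters_o H 2 D z)"
      proof
        assume "\<exists>z. ordered_tree le S' D z \<and> shatters_o H 2 D z"
        then obtain z where z: "ordered_tree le S' D z" "shatters_o H 2 D z" by blast
        have "ordered_tree le S D z" using ord_mono[OF z(1)] unfolding S'_def by blast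
        moreover have "shatters_o F 2 D z" using shat_mono[OF z(2) HF] .
        ultimately show False using ns by blast
      qed
      have vH: "\<forall>f\<in>H. \<forall>a. f a \<in> of_nat ` {0..k}" using vals HF by blast
      show "cov H n (sub x False) (GG k D n)" "cov H n (sub x True) (GG k D n)"
        using Suc.IH[OF osub vH nsH] by blast+
      show "\<forall>f\<in>H. \<bar>real a + 1 / 2 - f (x 0 [])\<bar> \<le> 1 / 2"
        unfolding H_def Fi_def x0_def by auto
    qed
    have covI: "\<forall>i\<in>I. cov (Fi i) (Suc n) x (GG k D' n)"
    proof
      fix i assume "i \<in> I"
      then have nB: "\<not> Big i" using a(2) I_def by blast
      have FiF: "Fi i \<subseteq> F" unfolding Fi_def by auto
      have vFi: "\<forall>f\<in>Fi i. \<forall>a. f a \<in> of_nat ` {0..k}" using vals FiF by blast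
      have nsFi: "\<not> (\<exists>z. ordered_tree le S' D' z \<and> shatters_o (Fi i) 2 D' z)"
        using nB unfolding Big_def .
      show "cov (Fi i) (Suc n) x (GG k D' n)"
      proof (rule cov_glue[where c = "real i"])
        show "cov (Fi i) n (sub x False) (GG k D' n)" "cov (Fi i) n (sub x True) (GG k D' n)"
          using Suc.IH[OF osub vFi nsFi] by blast+
        show "\<forall>f\<in>Fi i. \<bar>real i - f (x 0 [])\<bar> \<le> 1 / 2"
          unfolding Fi_def x0_def by auto
      qed
    qed
    have Fdec: "F = H \<union> (\<Union>i\<in>I. Fi i)"
    proof
      show "F \<subseteq> H \<union> (\<Union>i\<in>I. Fi i)"
      proof
        fix f assume f: "f \<in> F"
        then obtain i where i: "i \<in> {0..k}" "f x0 = real i" using vals by blast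
        show "f \<in> H \<union> (\<Union>i\<in>I. Fi i)"
          using i f unfolding H_def I_def Fi_def by auto
      qed
      show "H \<union> (\<Union>i\<in>I. Fi i) \<subseteq> F" using HF unfolding Fi_def by auto
    qed
    have "cov F (Suc n) x (GG k D n + card I * GG k D' n)"
      unfolding Fdec by (intro cov_union covH cov_UN covI) (simp add: I_def)
    moreover have "card I \<le> k"
    proof -
      have "I \<subseteq> {0..k} - {a}" unfolding I_def by auto
      then have "card I \<le> card ({0..k} - {a})" by (intro card_mono) auto
      also have "\<dots> = k" using a(1) by simp
      finally show ?thesis .
    qed
    ultimately have "cov F (Suc n) x (GG k D n + k * GG k D' n)"
      by (elim cov_mono) simp
    then show ?thesis using GG_rec D by simp
  qed
qed



lemma exp_partial: "(\<Sum>i<m. 1 / fact i) \<le> (exp 1 :: real)"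
  using summable_exp_generic[of "1::real"]
  by (auto simp: exp_def divide_inverse ac_simps intro!: sum_le_suminf)

lemma N_inf_le:
  assumes "finite V" "card V \<le> M" "is_seq_cover V F \<gamma> n x"
  shows "\<exists>m. N_inf F \<gamma> n x = enat m \<and> m \<le> M"
proof -
  define A where "A = {enat (card V) | V. finite V \<and> is_seq_cover V F \<gamma> n x}"
  have inA: "enat (card V) \<in> A" using assms unfolding A_def by blast
  have "Inf A \<in> A" unfolding Inf_enat_def using inA by (auto intro: LeastI)
  moreover have "A \<subseteq> range enat" unfolding A_def by auto
  ultimately obtain m where V': "Inf A = enat m" by blast
  have "Inf A \<le> enat (card V)" using inA by (rule Inf_lower)
  then have "m \<le> M" using V' assms(2) by simp
  moreover have "N_inf F \<gamma> n x = Inf A" unfolding N_inf_def A_def ..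
  ultimately show ?thesis using V' by auto
qed

lemma floor_facts:
  fixes w \<beta> :: real assumes "\<beta> > 0"
  shows "\<beta> * of_int \<lfloor>(w+1)/\<beta>\<rfloor> \<le> w + 1" "w + 1 < \<beta> * (of_int \<lfloor>(w+1)/\<beta>\<rfloor> + 1)"
proof -
  have "of_int \<lfloor>(w+1)/\<beta>\<rfloor> \<le> (w+1)/\<beta>" by (rule of_int_floor_le)
  then show "\<beta> * of_int \<lfloor>(w+1)/\<beta>\<rfloor> \<le> w + 1" using assms by (metis mult.commute pos_le_divide_eq)
  have "(w+1)/\<beta> < of_int \<lfloor>(w+1)/\<beta>\<rfloor> + 1" by (rule real_of_int_floor_add_one_gt)
  then show "w + 1 < \<beta> * (of_int \<lfloor>(w+1)/\<beta>\<rfloor> + 1)" using assms by (metis mult.commute pos_divide_less_eq)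
qed

definition disc :: "real \<Rightarrow> ('a \<Rightarrow> real) \<Rightarrow> 'a \<Rightarrow> real" where
  "disc \<beta> g = (\<lambda>a. real (nat \<lfloor>(g a + 1) / \<beta>\<rfloor>))"

lemma disc_eq: "\<beta> > 0 \<Longrightarrow> w \<ge> -1 \<Longrightarrow> real (nat \<lfloor>(w + 1) / \<beta>\<rfloor>) = of_int \<lfloor>(w+1)/\<beta>\<rfloor>"
  by simp

lemma shat_transfer:
  assumes b: "\<beta> > 0" and G: "\<forall>g\<in>G. \<forall>a. g a \<in> {-1..1}"
    and sh: "shatters_o (disc \<beta> ` G) 2 D z"
  shows "shatters_o G \<beta> D z"
proof -
  obtain s where s: "\<forall>y. length y = D \<longrightarrow> (\<exists>f\<in>disc \<beta> ` G. \<forall>t<D. sgn_bit (y ! t) * (f (node z t y) - node s t y) \<ge> 2 / 2)"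
    using sh unfolding shatters_o_def by blast
  define s' where "s' = (\<lambda>t p. \<beta> * s t p - 1 + \<beta>/2)"
  have ns': "node s' t y = \<beta> * node s t y - 1 + \<beta>/2" for t y unfolding s'_def node_def by simp
  show ?thesis unfolding shatters_o_def
  proof (intro exI[of _ s'] allI impI)
    fix y :: "bool list" assume y: "length y = D"
    then obtain g where g: "g \<in> G" and
      gt: "\<forall>t<D. sgn_bit (y ! t) * (disc \<beta> g (node z t y) - node s t y) \<ge> 2 / 2"
      using s by blast
    have "\<forall>t<D. sgn_bit (y ! t) * (g (node z t y) - node s' t y) \<ge> \<beta> / 2"
    proof (intro allI impI)
      fix t assume t: "t < D"
      define w where "w = g (node z t y)"
      define q where "q = (of_int \<lfloor>(w+1)/\<beta>\<rfloor> :: real)"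
      define c where "c = node s t y"
      have w: "w \<ge> -1" "w \<le> 1" using G g unfolding w_def by auto
      have dq0: "real (nat \<lfloor>(w+1)/\<beta>\<rfloor>) = q" using disc_eq[OF b w(1)] unfolding q_def .
      have dq: "disc \<beta> g (node z t y) = q" using dq0 by (simp add: disc_def w_def)
      have f1: "\<beta> * q \<le> w + 1" "w + 1 < \<beta> * (q + 1)" using floor_facts[OF b, of w] unfolding q_def by auto
      have "sgn_bit (y ! t) * (disc \<beta> g (node z t y) - node s t y) \<ge> 2/2" using gt t by blast
      then have h: "sgn_bit (y ! t) * (q - c) \<ge> 1" using dq unfolding c_def by simp
      show "sgn_bit (y ! t) * (g (node z t y) - node s' t y) \<ge> \<beta> / 2"
      proof (cases "y ! t")
        case True
        then have "q - c \<ge> 1" using h by (simp add: sgn_bit_def)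
        then have "\<beta> * (q - c) \<ge> \<beta> * 1" using b by (intro mult_left_mono) auto
        then show ?thesis using True f1 unfolding ns' sgn_bit_def w_def[symmetric] c_def[symmetric]
          by (simp add: algebra_simps)
      next
        case False
        then have "c - q \<ge> 1" using h by (simp add: sgn_bit_def)
        then have "\<beta> * (c - q) \<ge> \<beta> * 1" using b by (intro mult_left_mono) auto
        then show ?thesis using False f1 unfolding ns' sgn_bit_def w_def[symmetric] c_def[symmetric]
          by (simp add: algebra_simps)
      qed
    qed
    then show "\<exists>f\<in>G. \<forall>t<D. \<beta> / 2 \<le> sgn_bit (y ! t) * (f (node z t y) - node s' t y)"
      using g by blast
  qed
qed

lemma cover_transfer:
  assumes b: "\<beta> > 0" and G: "\<forall>g\<in>G. \<forall>a. g a \<in> {-1..1}"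
    and cv: "is_seq_cover V (disc \<beta> ` G) (1/2) n z"
  shows "is_seq_cover ((\<lambda>v t p. \<beta> * v t p - 1 + \<beta>/2) ` V) G \<beta> n z"
  unfolding is_seq_cover_def
proof (intro ballI allI impI)
  fix g and y :: "bool list" assume g: "g \<in> G" and y: "length y = n"
  obtain v where v: "v \<in> V" "\<forall>t<n. \<bar>node v t y - disc \<beta> g (node z t y)\<bar> \<le> 1/2"
    using cv g y unfolding is_seq_cover_def by blast
  let ?v = "(\<lambda>t p. \<beta> * v t p - 1 + \<beta>/2)"
  have "\<forall>t<n. \<bar>node ?v t y - g (node z t y)\<bar> \<le> \<beta>"
  proof (intro allI impI)
    fix t assume t: "t < n"
    define w where "w = g (node z t y)"
    define q where "q = (of_int \<lfloor>(w+1)/\<beta>\<rfloor> :: real)"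
    define c where "c = node v t y"
    have w: "w \<ge> -1" "w \<le> 1" using G g unfolding w_def by auto
    have dq0: "real (nat \<lfloor>(w+1)/\<beta>\<rfloor>) = q" using disc_eq[OF b w(1)] unfolding q_def .
      have dq: "disc \<beta> g (node z t y) = q" using dq0 by (simp add: disc_def w_def)
    have f1: "\<beta> * q \<le> w + 1" "w + 1 < \<beta> * (q + 1)" using floor_facts[OF b, of w] unfolding q_def by auto
    have "\<bar>node v t y - disc \<beta> g (node z t y)\<bar> \<le> 1/2" using v(2) t by blast
    then have "\<bar>c - q\<bar> \<le> 1/2" using dq unfolding c_def by simp
    then have "\<beta> * \<bar>c - q\<bar> \<le> \<beta> * (1/2)" using b by (intro mult_left_mono) auto
    then have "\<bar>\<beta> * c - \<beta> * q\<bar> \<le> \<beta> / 2" using b by (simp add: abs_mult right_diff_distrib[symmetric])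
    moreover have "node ?v t y = \<beta> * c - 1 + \<beta>/2" unfolding c_def node_def by simp
    moreover have "\<beta> * c - \<beta> * q \<le> \<beta>/2 \<and> -(\<beta> * c - \<beta> * q) \<le> \<beta>/2"
      using calculation(1) by (simp only: abs_le_iff)
    moreover have "w + 1 < \<beta> * q + \<beta>" using f1(2) by (simp add: algebra_simps)
    ultimately show "\<bar>node ?v t y - g (node z t y)\<bar> \<le> \<beta>"
      using f1(1) unfolding w_def[symmetric] abs_le_iff by (intro conjI; elim conjE; linarith)
  qed
  then show "\<exists>v\<in>(\<lambda>v t p. \<beta> * v t p - 1 + \<beta>/2) ` V. \<forall>t<n. \<bar>node v t y - g (node z t y)\<bar> \<le> \<beta>"
    using v(1) by blast
qed



lemma GG_bound:
  assumes k1: "k \<ge> 1" and n1: "n \<ge> 1" and b: "\<beta> > 0" and kb: "real k \<le> 2 / \<beta>"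
  shows "real (GG k (Suc d) n) \<le> (2 * exp 1 * real n / \<beta>) ^ d"
proof (cases "d = 0")
  case True
  then show ?thesis by (simp add: GG_def)
next
  case False
  have kn: "real k * real n \<ge> 1"
    using mult_mono[of 1 "real k" 1 "real n"] k1 n1 by simp
  have "real (GG k (Suc d) n) = (\<Sum>i<Suc d. real (n choose i) * real k ^ i)"
    unfolding GG_def by simp
  also have "\<dots> \<le> (\<Sum>i<Suc d. (real k * real n) ^ d / fact i)"
  proof (rule sum_mono)
    fix i assume i: "i \<in> {..<Suc d}"
    have "real ((n choose i) * fact i) \<le> real (n ^ i)" using binomial_fact_pow[of n i] by (simp only: of_nat_le_iff)
    then have "real (n choose i) * fact i \<le> real n ^ i" by simp
    then have c: "real (n choose i) \<le> real n ^ i / fact i" by (simp add: field_simps)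
    have "real (n choose i) * real k ^ i \<le> real n ^ i / fact i * real k ^ i"
      using c by (intro mult_right_mono) auto
    also have "\<dots> = (real k * real n) ^ i / fact i" by (simp add: power_mult_distrib)
    also have "\<dots> \<le> (real k * real n) ^ d / fact i"
      using i kn by (intro divide_right_mono power_increasing) auto
    finally show "real (n choose i) * real k ^ i \<le> (real k * real n) ^ d / fact i" .
  qed
  also have "\<dots> = (real k * real n) ^ d * (\<Sum>i<Suc d. 1 / fact i)"
    unfolding sum_distrib_left by (rule sum.cong) auto
  also have "\<dots> \<le> (real k * real n) ^ d * exp 1"
    using exp_partial[of "Suc d"] kn by (intro mult_left_mono) auto
  also have "\<dots> \<le> (real k * real n) ^ d * exp 1 ^ d"
  proof -
    have "exp (1::real) ^ 1 \<le> exp 1 ^ d" using False by (intro power_increasing) auto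
    then show ?thesis using kn by (intro mult_left_mono) auto
  qed
  also have "\<dots> = (exp 1 * real k * real n) ^ d" by (simp add: power_mult_distrib)
  also have "\<dots> \<le> (2 * exp 1 * real n / \<beta>) ^ d"
  proof (rule power_mono)
    have "exp 1 * real k * real n \<le> exp 1 * (2 / \<beta>) * real n"
      using kb by (intro mult_right_mono mult_left_mono) auto
    also have "exp 1 * (2 / \<beta>) * real n = 2 * exp 1 * real n / \<beta>" by simp
    finally show "exp 1 * real k * real n \<le> 2 * exp 1 * real n / \<beta>" .
    show "0 \<le> exp 1 * real k * real n" by simp
  qed
  finally show ?thesis .
qed



theorem theorem4:
  fixes le :: "'a \<Rightarrow> 'a \<Rightarrow> bool"
  assumes "reflp le" and "transp le"
  shows
   "(\<forall>(F :: ('a \<Rightarrow> real) set) (k :: nat) (d :: nat) (n :: nat) x.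
       k \<ge> 1 \<longrightarrow> (\<forall>f\<in>F. \<forall>a. f a \<in> of_nat ` {0..k}) \<longrightarrow>
       fat_o le F UNIV 2 = enat d \<longrightarrow> n > d \<longrightarrow> ordered_tree le UNIV n x \<longrightarrow>
       N_inf F (1/2) n x \<le> enat (\<Sum>i=0..d. (n choose i) * k ^ i))
    \<and>
    (\<forall>(G :: ('a \<Rightarrow> real) set) (\<beta> :: real) (n :: nat) x (d :: nat).
       (\<forall>g\<in>G. \<forall>a. g a \<in> {-1..1}) \<longrightarrow> \<beta> > 0 \<longrightarrow> n \<ge> 1 \<longrightarrow>
       ordered_tree le UNIV n x \<longrightarrow> fat_o le G UNIV \<beta> = enat d \<longrightarrow>
       (\<exists>m. N_inf G \<beta> n x = enat m \<and> real m \<le> (2 * exp 1 * real n / \<beta>) ^ d))"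
proof (rule conjI)
  show "\<forall>(F :: ('a \<Rightarrow> real) set) (k :: nat) (d :: nat) (n :: nat) x.
       k \<ge> 1 \<longrightarrow> (\<forall>f\<in>F. \<forall>a. f a \<in> of_nat ` {0..k}) \<longrightarrow>
       fat_o le F UNIV 2 = enat d \<longrightarrow> n > d \<longrightarrow> ordered_tree le UNIV n x \<longrightarrow>
       N_inf F (1/2) n x \<le> enat (\<Sum>i=0..d. (n choose i) * k ^ i)"
  proof (intro allI impI)
    fix F :: "('a \<Rightarrow> real) set" and k d n :: nat and x
    assume vals: "\<forall>f\<in>F. \<forall>a. f a \<in> of_nat ` {0..k}" and fat: "fat_o le F UNIV 2 = enat d"
      and ord: "ordered_tree le UNIV n x"
    have ns: "\<not> (\<exists>z. ordered_tree le UNIV (Suc d) z \<and> shatters_o F 2 (Suc d) z)"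
    proof
      assume "\<exists>z. ordered_tree le UNIV (Suc d) z \<and> shatters_o F 2 (Suc d) z"
      then have "enat (Suc d) \<le> fat_o le F UNIV 2" unfolding fat_o_def by (intro Sup_upper) blast
      with fat show False by simp
    qed
    have "cov F n x (GG k (Suc d) n)" by (rule core[OF assms ord vals ns])
    then obtain V where V: "finite V" "card V \<le> GG k (Suc d) n" "is_seq_cover V F (1/2) n x"
      unfolding cov_def by blast
    obtain m where m: "N_inf F (1/2) n x = enat m" "m \<le> GG k (Suc d) n"
      using N_inf_le[OF V] by blast
    have "GG k (Suc d) n = (\<Sum>i=0..d. (n choose i) * k ^ i)"
      unfolding GG_def by (simp add: lessThan_Suc_atMost atLeast0AtMost)
    then show "N_inf F (1/2) n x \<le> enat (\<Sum>i=0..d. (n choose i) * k ^ i)" using m by simp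
  qed
next
  show "\<forall>(G :: ('a \<Rightarrow> real) set) (\<beta> :: real) (n :: nat) x (d :: nat).
       (\<forall>g\<in>G. \<forall>a. g a \<in> {-1..1}) \<longrightarrow> \<beta> > 0 \<longrightarrow> n \<ge> 1 \<longrightarrow>
       ordered_tree le UNIV n x \<longrightarrow> fat_o le G UNIV \<beta> = enat d \<longrightarrow>
       (\<exists>m. N_inf G \<beta> n x = enat m \<and> real m \<le> (2 * exp 1 * real n / \<beta>) ^ d)"
  proof (intro allI impI)
    fix G :: "('a \<Rightarrow> real) set" and \<beta> :: real and n :: nat and x and d :: nat
    assume Gv: "\<forall>g\<in>G. \<forall>a. g a \<in> {-1..1}" and b: "\<beta> > 0" and n1: "n \<ge> 1"
      and ord: "ordered_tree le UNIV n x" and fat: "fat_o le G UNIV \<beta> = enat d"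
    show "\<exists>m. N_inf G \<beta> n x = enat m \<and> real m \<le> (2 * exp 1 * real n / \<beta>) ^ d"
    proof (cases "\<beta> > 2")
      case True
      have d0: "d = 0"
      proof (rule ccontr)
        assume "d \<noteq> 0"
        then have "0 < fat_o le G UNIV \<beta>" using fat by (simp add: zero_enat_def)
        then obtain e where e: "e \<in> {enat d | d. \<exists>x. ordered_tree le UNIV d x \<and> shatters_o G \<beta> d x}" "0 < e"
          unfolding fat_o_def less_Sup_iff by blast
        then obtain D z where Dz: "e = enat D" "shatters_o G \<beta> D z" by blast
        have D: "D > 0" using e(2) Dz(1) by (simp add: zero_enat_def)
        obtain s where s: "\<forall>y. length y = D \<longrightarrow> (\<exists>f\<in>G. \<forall>t<D. sgn_bit (y ! t) * (f (node z t y) - node s t y) \<ge> \<beta> / 2)"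
          using Dz(2) unfolding shatters_o_def by blast
        obtain g1 where g1: "g1 \<in> G" "\<forall>t<D. sgn_bit (replicate D True ! t) * (g1 (node z t (replicate D True)) - node s t (replicate D True)) \<ge> \<beta> / 2"
          using s by (metis length_replicate)
        obtain g0 where g0: "g0 \<in> G" "\<forall>t<D. sgn_bit (replicate D False ! t) * (g0 (node z t (replicate D False)) - node s t (replicate D False)) \<ge> \<beta> / 2"
          using s by (metis length_replicate)
        have "g1 (z 0 []) - s 0 [] \<ge> \<beta> / 2" using g1(2) D by (auto simp: node_0 sgn_bit_def)
        moreover have "s 0 [] - g0 (z 0 []) \<ge> \<beta> / 2" using g0(2) D by (auto simp: node_0 sgn_bit_def)
        moreover have "g1 (z 0 []) \<le> 1" "g0 (z 0 []) \<ge> -1" using Gv g1(1) g0(1) by auto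
        ultimately show False using True by linarith
      qed
      have cv: "is_seq_cover {\<lambda>_ _. 0} G \<beta> n x"
        unfolding is_seq_cover_def
      proof (intro ballI allI impI)
        fix g and y :: "bool list" assume g: "g \<in> G" and "length y = n"
        have "\<forall>t<n. \<bar>node (\<lambda>_ _. 0) t y - g (node x t y)\<bar> \<le> \<beta>"
        proof (intro allI impI)
          fix t
          have "\<bar>g (node x t y)\<bar> \<le> 1" using Gv g by (auto simp: abs_le_iff)
          then show "\<bar>node (\<lambda>_ _. 0) t y - g (node x t y)\<bar> \<le> \<beta>" using True by (simp add: node_def)
        qed
        then show "\<exists>v\<in>{\<lambda>_ _. 0}. \<forall>t<n. \<bar>node v t y - g (node x t y)\<bar> \<le> \<beta>" by blast
      qed
      have "\<exists>m. N_inf G \<beta> n x = enat m \<and> m \<le> 1"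
        by (rule N_inf_le[OF _ _ cv]) simp_all
      then obtain m where m: "N_inf G \<beta> n x = enat m" "m \<le> 1" by blast
      have fin: "real m \<le> (2 * exp 1 * real n / \<beta>) ^ d" using m(2) d0 by simp
      show ?thesis by (rule exI[of _ m], rule conjI[OF m(1) fin])
    next
      case False
      define k where "k = nat \<lfloor>2 / \<beta>\<rfloor>"
      have "2 / \<beta> \<ge> 1" using False b by (simp add: field_simps)
      then have k1: "k \<ge> 1" unfolding k_def by linarith
      have kb: "real k \<le> 2 / \<beta>" unfolding k_def using \<open>2 / \<beta> \<ge> 1\<close> by linarith
      define F where "F = disc \<beta> ` G"
      have vals: "\<forall>f\<in>F. \<forall>a. f a \<in> of_nat ` {0..k}"
      proof (intro ballI allI)
        fix f a assume "f \<in> F"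
        then obtain g where g: "g \<in> G" "f = disc \<beta> g" unfolding F_def by blast
        have "g a \<le> 1" using Gv g by auto
        then have "(g a + 1) / \<beta> \<le> 2 / \<beta>" using b by (intro divide_right_mono) auto
        then have "nat \<lfloor>(g a + 1) / \<beta>\<rfloor> \<le> k" unfolding k_def by (intro nat_mono floor_mono)
        then show "f a \<in> of_nat ` {0..k}" unfolding g disc_def by auto
      qed
      have ns: "\<not> (\<exists>z. ordered_tree le UNIV (Suc d) z \<and> shatters_o F 2 (Suc d) z)"
      proof
        assume "\<exists>z. ordered_tree le UNIV (Suc d) z \<and> shatters_o F 2 (Suc d) z"
        then obtain z where z: "ordered_tree le UNIV (Suc d) z" "shatters_o F 2 (Suc d) z" by blast
        have "shatters_o G \<beta> (Suc d) z" using shat_transfer[OF b Gv] z(2) unfolding F_def .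
        then have "enat (Suc d) \<le> fat_o le G UNIV \<beta>" unfolding fat_o_def using z(1) by (intro Sup_upper) blast
        with fat show False by simp
      qed
      have "cov F n x (GG k (Suc d) n)" by (rule core[OF assms ord vals ns])
      then obtain V where V: "finite V" "card V \<le> GG k (Suc d) n" "is_seq_cover V F (1/2) n x"
        unfolding cov_def by blast
      let ?V = "(\<lambda>v t p. \<beta> * v t p - 1 + \<beta>/2) ` V"
      have "is_seq_cover ?V G \<beta> n x" using cover_transfer[OF b Gv] V(3) unfolding F_def .
      moreover have "card ?V \<le> GG k (Suc d) n" using card_image_le[OF V(1)] V(2) le_trans by blast
      moreover have "finite ?V" using V(1) by simp
      ultimately obtain m where m: "N_inf G \<beta> n x = enat m" "m \<le> GG k (Suc d) n"
        using N_inf_le by blast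
      have "real m \<le> real (GG k (Suc d) n)" using m(2) by simp
      also have "\<dots> \<le> (2 * exp 1 * real n / \<beta>) ^ d" by (rule GG_bound[OF k1 n1 b kb])
      finally have fin: "real m \<le> (2 * exp 1 * real n / \<beta>) ^ d" .
      show ?thesis by (rule exI[of _ m], rule conjI[OF m(1) fin])
    qed
  qed
qed

end
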